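(* For every tree $T$, $\gamma^{DLD}(T)=\beta(T)$.
   Context: For a vertex $u$, $N(u)$ is its set of neighbours and $N[u]=N(u)\cup\{u\}$. A code in a graph with vertex set $V$ is a non-empty subset $C\subseteq V$; $I(C;u)=N[u]\cap C$. A code $C$ is solid-locating-dominating if $I(C;u)\ne\emptyset$ for every $u\in V\setminus C$ and $I(C;u)\not\subseteq I(C;v)$ for all distinct $u,v\in V\setminus C$; $\gamma^{DLD}$ denotes the minimum size of such a code. $\beta(T)$ is the independence number of $T$ (maximum size of a set of pairwise non-adjacent vertices). *)

theory Defs
  imports Main
begin

definition simple_graph :: "'a set \<Rightarrow> 'a set set \<Rightarrow> bool" where
  "simple_graph V E \<longleftrightarrow> finite V \<and> (\<forall>e\<in>E. e \<subseteq> V \<and> card e = 2)"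

definition adj :: "'a set set \<Rightarrow> 'a \<Rightarrow> 'a \<Rightarrow> bool" where
  "adj E u v \<longleftrightarrow> {u, v} \<in> E"

definition connected_graph :: "'a set \<Rightarrow> 'a set set \<Rightarrow> bool" where
  "connected_graph V E \<longleftrightarrow> V \<noteq> {} \<and>
     (\<forall>u\<in>V. \<forall>v\<in>V. (u, v) \<in> {(x, y). x \<in> V \<and> y \<in> V \<and> adj E x y}\<^sup>*)"

definition is_tree :: "'a set \<Rightarrow> 'a set set \<Rightarrow> bool" where
  "is_tree V E \<longleftrightarrow> simple_graph V E \<and> connected_graph V E \<and> card E + 1 = card V"

definition open_nbhd :: "'a set \<Rightarrow> 'a set set \<Rightarrow> 'a \<Rightarrow> 'a set" where
  "open_nbhd V E u = {v \<in> V. adj E u v}"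

definition closed_nbhd :: "'a set \<Rightarrow> 'a set set \<Rightarrow> 'a \<Rightarrow> 'a set" where
  "closed_nbhd V E u = insert u (open_nbhd V E u)"

definition I_code :: "'a set \<Rightarrow> 'a set set \<Rightarrow> 'a set \<Rightarrow> 'a \<Rightarrow> 'a set" where
  "I_code V E C u = closed_nbhd V E u \<inter> C"

definition solid_locating_dominating :: "'a set \<Rightarrow> 'a set set \<Rightarrow> 'a set \<Rightarrow> bool" where
  "solid_locating_dominating V E C \<longleftrightarrow> C \<noteq> {} \<and> C \<subseteq> V \<and>
     (\<forall>u \<in> V - C. I_code V E C u \<noteq> {}) \<and>
     (\<forall>u \<in> V - C. \<forall>v \<in> V - C. u \<noteq> v \<longrightarrow> \<not> (I_code V E C u \<subseteq> I_code V E C v))"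

definition gamma_DLD :: "'a set \<Rightarrow> 'a set set \<Rightarrow> nat" where
  "gamma_DLD V E = (LEAST k. \<exists>C. solid_locating_dominating V E C \<and> card C = k)"

definition independent_set :: "'a set \<Rightarrow> 'a set set \<Rightarrow> 'a set \<Rightarrow> bool" where
  "independent_set V E S \<longleftrightarrow> S \<subseteq> V \<and> (\<forall>u\<in>S. \<forall>v\<in>S. \<not> adj E u v)"

definition independence_number :: "'a set \<Rightarrow> 'a set set \<Rightarrow> nat" where
  "independence_number V E = Max {card S | S. independent_set V E S}"

end

theory Submission
  imports Defs
begin

lemma adj_sym: "adj E u v = adj E v u"
  by (simp add: adj_def insert_commute)

locale rtree =
  fixes V :: "'a set" and E :: "'a set set" and r :: 'a and par :: "'a \<Rightarrow> 'a" and dep :: "'a \<Rightarrow> nat"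
  assumes fin: "finite V" and rV: "r \<in> V"
  and parV: "\<And>v. v \<in> V \<Longrightarrow> v \<noteq> r \<Longrightarrow> par v \<in> V"
  and paradj: "\<And>v. v \<in> V \<Longrightarrow> v \<noteq> r \<Longrightarrow> adj E v (par v)"
  and pardep: "\<And>v. v \<in> V \<Longrightarrow> v \<noteq> r \<Longrightarrow> dep v = Suc (dep (par v))"
  and dep0: "dep r = 0"
  and irr: "\<And>u. \<not> adj E u u"
  and adjpar: "\<And>u v. u \<in> V \<Longrightarrow> v \<in> V \<Longrightarrow> adj E u v \<Longrightarrow> (u \<noteq> r \<and> par u = v) \<or> (v \<noteq> r \<and> par v = u)"
begin

lemma Icode_mem: "c \<in> I_code V E C s \<Longrightarrow> s \<notin> C \<Longrightarrow> c \<in> C \<and> c \<in> V \<and> adj E s c"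
  by (auto simp: I_code_def closed_nbhd_def open_nbhd_def)

lemma lower:
  assumes D: "solid_locating_dominating V E C" and S: "independent_set V E S"
  shows "card S \<le> card C"
proof -
  have CV: "C \<subseteq> V" and ne: "\<forall>u \<in> V - C. I_code V E C u \<noteq> {}"
    and ac: "\<forall>u \<in> V - C. \<forall>v \<in> V - C. u \<noteq> v \<longrightarrow> \<not> (I_code V E C u \<subseteq> I_code V E C v)"
    using D by (auto simp: solid_locating_dominating_def)
  have SV: "S \<subseteq> V" and ind: "\<forall>u\<in>S. \<forall>v\<in>S. \<not> adj E u v" using S by (auto simp: independent_set_def)
  define ch where "ch s = (\<exists>c. c \<in> I_code V E C s \<and> c \<noteq> r \<and> par c = s)" for s
  define phi where "phi s = (if ch s then SOME c. c \<in> I_code V E C s \<and> c \<noteq> r \<and> par c = s else par s)" for s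
  have chI: "phi s \<in> I_code V E C s \<and> phi s \<noteq> r \<and> par (phi s) = s" if "ch s" for s
  proof -
    have "phi s = (SOME c. c \<in> I_code V E C s \<and> c \<noteq> r \<and> par c = s)" using that by (simp add: phi_def)
    then show ?thesis using someI_ex[of "\<lambda>c. c \<in> I_code V E C s \<and> c \<noteq> r \<and> par c = s"] that
      unfolding ch_def by simp
  qed
  have nch: "s \<noteq> r \<and> I_code V E C s = {par s} \<and> phi s = par s" if "s \<in> V - C" "\<not> ch s" for s
  proof -
    have "c = par s \<and> s \<noteq> r" if "c \<in> I_code V E C s" for c
    proof -
      have "c \<in> C \<and> c \<in> V \<and> adj E s c" using Icode_mem[OF that] \<open>s \<in> V - C\<close> by auto
      then have "(s \<noteq> r \<and> par s = c) \<or> (c \<noteq> r \<and> par c = s)" using adjpar \<open>s \<in> V - C\<close> by auto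
      then show ?thesis using \<open>\<not> ch s\<close> that unfolding ch_def by auto
    qed
    moreover have "I_code V E C s \<noteq> {}" using ne that by auto
    ultimately show ?thesis using that unfolding phi_def by auto
  qed
  have phiI: "phi s \<in> I_code V E C s" if "s \<in> V - C" for s
    using chI nch that by (cases "ch s") auto
  have img: "phi ` (S - C) \<subseteq> C - S"
  proof
    fix x assume "x \<in> phi ` (S - C)"
    then obtain s where s: "s \<in> S - C" "x = phi s" by auto
    then have "x \<in> C \<and> x \<in> V \<and> adj E s x" using Icode_mem phiI SV by blast
    then show "x \<in> C - S" using ind s by auto
  qed
  have inj: "inj_on phi (S - C)"
  proof (rule inj_onI, rule ccontr)
    fix s1 s2 assume s1: "s1 \<in> S - C" and s2: "s2 \<in> S - C" and eq: "phi s1 = phi s2" and ne: "s1 \<noteq> s2"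
    have v1: "s1 \<in> V - C" and v2: "s2 \<in> V - C" using s1 s2 SV by auto
    show False
    proof (cases "ch s1")
      case c1: True
      show ?thesis
      proof (cases "ch s2")
        case True then show ?thesis using chI c1 eq ne by metis
      next
        case False
        then have "I_code V E C s2 \<subseteq> I_code V E C s1" using nch[OF v2] phiI[OF v1] eq by auto
        then show ?thesis using ac v1 v2 ne by auto
      qed
    next
      case c1: False
      show ?thesis
      proof (cases "ch s2")
        case True
        then have "I_code V E C s1 \<subseteq> I_code V E C s2" using nch[OF v1 c1] phiI[OF v2] eq by auto
        then show ?thesis using ac v1 v2 ne by auto
      next
        case False
        then have "I_code V E C s1 \<subseteq> I_code V E C s2" using nch[OF v1 c1] nch[OF v2] eq by auto
        then show ?thesis using ac v1 v2 ne by auto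
      qed
    qed
  qed
  have fS: "finite S" and fC: "finite C" using SV CV fin finite_subset by auto
  have "card (S - C) \<le> card (C - S)"
    by (rule card_inj_on_le[OF inj img]) (use fC in auto)
  moreover have "card S = card (S \<inter> C) + card (S - C)"
    using fS by (metis card_Int_Diff)
  moreover have "card C = card (C \<inter> S) + card (C - S)"
    using fC by (metis card_Int_Diff)
  ultimately show ?thesis by (simp add: Int_commute)
qed

lemma dep_pos: "v \<in> V \<Longrightarrow> v \<noteq> r \<Longrightarrow> dep v > 0"
  using pardep by simp

lemma build:
  "W \<subseteq> V \<Longrightarrow> (\<forall>v\<in>W. v \<noteq> r \<longrightarrow> par v \<in> W) \<Longrightarrow>
   \<exists>U S m. U \<subseteq> W \<and> S \<subseteq> W \<and> (\<forall>a\<in>S. \<forall>b\<in>S. \<not> adj E a b) \<and> card S + card U = card W \<and>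
     (\<forall>u\<in>U. m u \<in> W \<and> m u \<notin> U \<and> adj E u (m u) \<and> (\<forall>u'\<in>U. u' \<noteq> u \<longrightarrow> \<not> adj E (m u) u'))"
proof (induction "card W" arbitrary: W rule: less_induct)
  case less
  have fW: "finite W" using less.prems fin finite_subset by auto
  show ?case
  proof (cases "W = {}")
    case True then show ?thesis by auto
  next
    case False
    define d where "d = Max (dep ` W)"
    have "d \<in> dep ` W" unfolding d_def using False fW by simp
    then obtain l where l: "l \<in> W" "dep l = d" by auto
    have maxd: "dep x \<le> dep l" if "x \<in> W" for x using that fW l unfolding d_def by simp
    show ?thesis
    proof (cases "l = r")
      case True
      have "W = {r}"
      proof -
        have "x = r" if "x \<in> W" for x
          using maxd[OF that] True dep0 dep_pos[of x] that less.prems(1) by fastforce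
        then show ?thesis using l True by blast
      qed
      then show ?thesis using irr[of r] by (intro exI[of _ "{}"] exI[of _ "{r}"] exI[of _ "id"]) simp
    next
      case lr: False
      define p where "p = par l"
      have pW: "p \<in> W" using less.prems lr l unfolding p_def by auto
      define L where "L = {x \<in> W. x \<noteq> r \<and> par x = p}"
      define W2 where "W2 = W - insert p L"
      have WV: "W \<subseteq> V" using less.prems by simp
      have lL: "l \<in> L" using l lr unfolding L_def p_def by simp
      have depL: "dep x = dep l" if "x \<in> L" for x
      proof -
        have "x \<in> W" "x \<noteq> r" "par x = par l" using that unfolding L_def p_def by auto
        then show ?thesis using pardep[of x] pardep[of l] lr l WV by (metis subsetD)
      qed
      have childless: "False" if "x \<in> L" "y \<in> W" "y \<noteq> r" "par y = x" for x y
        using depL[OF that(1)] maxd[OF that(2)] pardep[of y] that WV by auto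
      have pnL: "p \<notin> L"
      proof
        assume "p \<in> L"
        then have "p \<noteq> r" "par p = p" unfolding L_def by auto
        then show False using pardep[of p] pW WV by auto
      qed
      have adjp: "p \<noteq> r \<and> par p = y" if "y \<in> W2" "adj E y p" for y
        using adjpar[of y p] that WV pW unfolding W2_def L_def by auto
      have nadjL: "\<not> adj E y x" if "y \<in> W" "x \<in> L" "y \<noteq> p" for y x
      proof
        assume ad: "adj E y x"
        have xW: "x \<in> W" "x \<noteq> r" "par x = p" using that(2) unfolding L_def by auto
        have "(y \<noteq> r \<and> par y = x) \<or> (x \<noteq> r \<and> par x = y)"
          using adjpar[of y x] ad that(1) xW(1) WV by blast
        then show False
        proof
          assume "y \<noteq> r \<and> par y = x"
          then show False using childless[of x y] that by blast
        next
          assume "x \<noteq> r \<and> par x = y"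
          then show False using xW that(3) by simp
        qed
      qed
      have W2sub: "W2 \<subseteq> V" using WV unfolding W2_def by auto
      have W2cl: "\<forall>v\<in>W2. v \<noteq> r \<longrightarrow> par v \<in> W2"
      proof (intro ballI impI)
        fix v assume v: "v \<in> W2" "v \<noteq> r"
        have pv: "par v \<in> W" using v less.prems unfolding W2_def by auto
        have "par v \<noteq> p" using v unfolding W2_def L_def by auto
        moreover have "par v \<notin> L"
        proof
          assume "par v \<in> L"
          moreover have "v \<in> W" using v unfolding W2_def by blast
          ultimately show False using childless[of "par v" v] v(2) by blast
        qed
        ultimately show "par v \<in> W2" using pv unfolding W2_def by auto
      qed
      have lt: "card W2 < card W" using pW fW unfolding W2_def by (intro psubset_card_mono) auto
      obtain U' S' m' where IH: "U' \<subseteq> W2" "S' \<subseteq> W2" "\<forall>a\<in>S'. \<forall>b\<in>S'. \<not> adj E a b"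
          "card S' + card U' = card W2"
          "\<forall>u\<in>U'. m' u \<in> W2 \<and> m' u \<notin> U' \<and> adj E u (m' u) \<and> (\<forall>u'\<in>U'. u' \<noteq> u \<longrightarrow> \<not> adj E (m' u) u')"
        using less.hyps[OF lt W2sub W2cl] by blast
      have fL: "finite L" using fW unfolding L_def by auto
      have fW2: "finite W2" using fW unfolding W2_def by simp
      have fU': "finite U'" "finite S'" using IH(1,2) fW2 finite_subset by blast+
      have cardW: "card W = card W2 + Suc (card L)"
      proof -
        have "W = W2 \<union> insert p L" "W2 \<inter> insert p L = {}" using pW unfolding W2_def L_def by auto
        then have "card W = card W2 + card (insert p L)" using fW by (metis card_Un_disjoint finite_Un)
        then show ?thesis using pnL fL by simp
      qed
      have cardS: "card (S' \<union> L) = card S' + card L"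
        using IH(2) fU' fL by (intro card_Un_disjoint) (auto simp: W2_def)
      have indS: "\<forall>a\<in>S' \<union> L. \<forall>b\<in>S' \<union> L. \<not> adj E a b"
      proof (intro ballI)
        fix a b assume a: "a \<in> S' \<union> L" and b: "b \<in> S' \<union> L"
        have aW: "a \<in> W" "a \<noteq> p" and bW: "b \<in> W" "b \<noteq> p" using a b IH(2) pnL unfolding W2_def L_def by auto
        show "\<not> adj E a b"
        proof (cases "b \<in> L")
          case True then show ?thesis using nadjL aW by auto
        next
          case False
          then have b': "b \<in> S'" using b by auto
          show ?thesis
          proof (cases "a \<in> L")
            case True then show ?thesis using nadjL[of b a] bW adj_sym by metis
          next
            case False then show ?thesis using a b' IH(3) by auto
          qed
        qed
      qed
      have SW: "S' \<union> L \<subseteq> W" using IH(2) unfolding W2_def L_def by auto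
      have lnW2: "l \<notin> W2" "p \<notin> W2" using lL unfolding W2_def by auto
      have pU: "p \<notin> U'" "l \<notin> U'" using IH(1) lnW2 by auto
      have adjlp: "adj E l p" using paradj lr l WV unfolding p_def by auto
      show ?thesis
      proof (cases "p \<noteq> r \<and> par p \<in> U'")
        case True
        define m where "m = m'(p := l)"
        show ?thesis
        proof (rule exI[of _ "insert p U'"], rule exI[of _ "S' \<union> L"], rule exI[of _ m], intro conjI)
          show "insert p U' \<subseteq> W" using IH(1) pW unfolding W2_def by auto
          show "S' \<union> L \<subseteq> W" by (rule SW)
          show "\<forall>a\<in>S' \<union> L. \<forall>b\<in>S' \<union> L. \<not> adj E a b" by (rule indS)
          show "card (S' \<union> L) + card (insert p U') = card W"
            using cardS cardW IH(4) pU fU' by simp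
          show "\<forall>u\<in>insert p U'. m u \<in> W \<and> m u \<notin> insert p U' \<and> adj E u (m u) \<and>
              (\<forall>u'\<in>insert p U'. u' \<noteq> u \<longrightarrow> \<not> adj E (m u) u')"
          proof
            fix u assume u: "u \<in> insert p U'"
            show "m u \<in> W \<and> m u \<notin> insert p U' \<and> adj E u (m u) \<and>
              (\<forall>u'\<in>insert p U'. u' \<noteq> u \<longrightarrow> \<not> adj E (m u) u')"
            proof (cases "u = p")
              case True
              have "\<not> adj E l u'" if "u' \<in> U'" for u'
              proof -
                have "u' \<in> W" "u' \<noteq> p" using that IH(1) unfolding W2_def by auto
                then show ?thesis using nadjL[of u' l] lL adj_sym by metis
              qed
              moreover have "l \<in> W" "l \<noteq> p" "l \<notin> U'" using lL pnL IH(1) lnW2 unfolding L_def by auto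
              moreover have "adj E p l" using adjlp adj_sym by metis
              ultimately show ?thesis using True unfolding m_def by auto
            next
              case False
              then have uU: "u \<in> U'" using u by auto
              have mu: "m u = m' u" using False unfolding m_def by simp
              have a: "m' u \<in> W2" "m' u \<notin> U'" "adj E u (m' u)" "\<forall>u'\<in>U'. u' \<noteq> u \<longrightarrow> \<not> adj E (m' u) u'"
                using IH(5) uU by blast+
              have "\<not> adj E (m' u) p" using adjp[OF a(1)] True a(2) by auto
              moreover have "m' u \<in> W" "m' u \<noteq> p" using a(1) unfolding W2_def by blast+
              ultimately show ?thesis using mu a by auto
            qed
          qed
        qed
      next
        case False
        define m where "m = m'(l := p)"
        show ?thesis
        proof (rule exI[of _ "insert l U'"], rule exI[of _ "S' \<union> L"], rule exI[of _ m], intro conjI)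
          show "insert l U' \<subseteq> W" using IH(1) l unfolding W2_def by auto
          show "S' \<union> L \<subseteq> W" by (rule SW)
          show "\<forall>a\<in>S' \<union> L. \<forall>b\<in>S' \<union> L. \<not> adj E a b" by (rule indS)
          show "card (S' \<union> L) + card (insert l U') = card W"
            using cardS cardW IH(4) pU fU' by simp
          show "\<forall>u\<in>insert l U'. m u \<in> W \<and> m u \<notin> insert l U' \<and> adj E u (m u) \<and>
              (\<forall>u'\<in>insert l U'. u' \<noteq> u \<longrightarrow> \<not> adj E (m u) u')"
          proof
            fix u assume u: "u \<in> insert l U'"
            show "m u \<in> W \<and> m u \<notin> insert l U' \<and> adj E u (m u) \<and>
              (\<forall>u'\<in>insert l U'. u' \<noteq> u \<longrightarrow> \<not> adj E (m u) u')"
            proof (cases "u = l")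
              case True
              have "\<not> adj E p u'" if "u' \<in> U'" for u'
              proof
                assume "adj E p u'"
                then have "adj E u' p" using adj_sym by metis
                moreover have "u' \<in> W2" using that IH(1) by auto
                ultimately have "p \<noteq> r \<and> par p = u'" using adjp by blast
                then show False using False that by auto
              qed
              moreover have "p \<noteq> l" "p \<notin> U'" using lL pnL IH(1) lnW2 by auto
              ultimately show ?thesis using True adjlp pW unfolding m_def by auto
            next
              case c: False
              then have uU: "u \<in> U'" using u by auto
              have mu: "m u = m' u" using c unfolding m_def by simp
              have a: "m' u \<in> W2" "m' u \<notin> U'" "adj E u (m' u)" "\<forall>u'\<in>U'. u' \<noteq> u \<longrightarrow> \<not> adj E (m' u) u'"
                using IH(5) uU by blast+
              moreover have "m' u \<in> W" "m' u \<noteq> p" "m' u \<noteq> l" using a(1) lnW2 unfolding W2_def by blast+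
              moreover have "\<not> adj E (m' u) l" using nadjL[of "m' u" l] calculation lL by blast
              ultimately show ?thesis using mu by auto
            qed
          qed
        qed
      qed
    qed
  qed
qed

end

lemma tree_rooted:
  assumes T: "is_tree V E"
  shows "\<exists>r par dep. rtree V E r par dep"
proof -
  have fin: "finite V" and edges: "\<forall>e\<in>E. e \<subseteq> V \<and> card e = 2"
    and ne: "V \<noteq> {}" and conn: "\<forall>u\<in>V. \<forall>v\<in>V. (u, v) \<in> {(x, y). x \<in> V \<and> y \<in> V \<and> adj E x y}\<^sup>*"
    and cE: "card E + 1 = card V"
    using T by (auto simp: is_tree_def simple_graph_def connected_graph_def)
  define R where "R = {(x, y). x \<in> V \<and> y \<in> V \<and> adj E x y}"
  obtain r where rV: "r \<in> V" using ne by auto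
  define dep where "dep v = (LEAST n. (r, v) \<in> R ^^ n)" for v
  have reach: "(r, v) \<in> R ^^ dep v" if "v \<in> V" for v
  proof -
    have "(r, v) \<in> R\<^sup>*" using conn rV that unfolding R_def by auto
    then obtain n where "(r, v) \<in> R ^^ n" using rtrancl_power by blast
    then show ?thesis unfolding dep_def by (rule LeastI)
  qed
  have dep_le: "dep v \<le> n" if "(r, v) \<in> R ^^ n" for v n
    unfolding dep_def using that by (rule Least_le)
  have dep0: "dep r = 0" using dep_le[of r 0] by simp
  have exPar: "\<exists>y. (y, v) \<in> R \<and> dep v = Suc (dep y)" if "v \<in> V" "v \<noteq> r" for v
  proof -
    have "dep v \<noteq> 0" using reach[OF that(1)] that(2) by (cases "dep v") auto
    then obtain k where k: "dep v = Suc k" by (cases "dep v") auto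
    then have "(r, v) \<in> R ^^ Suc k" using reach[OF that(1)] by simp
    then obtain y where y: "(r, y) \<in> R ^^ k" "(y, v) \<in> R" by (rule relpow_Suc_E)
    have "dep y \<le> k" using dep_le y by simp
    moreover have "(r, y) \<in> R ^^ dep y" using reach y unfolding R_def by auto
    then have "(r, v) \<in> R ^^ Suc (dep y)" using y(2) by (rule relpow_Suc_I)
    then have "dep v \<le> Suc (dep y)" by (rule dep_le)
    ultimately have "dep v = Suc (dep y)" using k by simp
    then show ?thesis using y by blast
  qed
  define par where "par v = (SOME y. (y, v) \<in> R \<and> dep v = Suc (dep y))" for v
  have parP: "(par v, v) \<in> R \<and> dep v = Suc (dep (par v))" if "v \<in> V" "v \<noteq> r" for v
    unfolding par_def using someI_ex[OF exPar[OF that]] .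
  have parV: "par v \<in> V" and paradj: "adj E v (par v)" and pardep: "dep v = Suc (dep (par v))"
    if "v \<in> V" "v \<noteq> r" for v
    using parP[OF that] adj_sym[of E v "par v"] unfolding R_def by auto
  have irr: "\<not> adj E u u" for u
  proof
    assume "adj E u u"
    then have "{u} \<in> E" by (simp add: adj_def)
    then show False using edges by fastforce
  qed
  define f where "f v = {v, par v}" for v
  have finE: "finite E"
  proof -
    have "E \<subseteq> Pow V" using edges by auto
    then show ?thesis using fin finite_subset by blast
  qed
  have fsub: "f ` (V - {r}) \<subseteq> E" using paradj unfolding f_def adj_def by auto
  have finj: "inj_on f (V - {r})"
  proof (rule inj_onI, rule ccontr)
    fix v w assume v: "v \<in> V - {r}" and w: "w \<in> V - {r}" and eq: "f v = f w" and ne: "v \<noteq> w"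
    from eq ne have "v = par w \<and> w = par v" unfolding f_def by (auto simp: doubleton_eq_iff)
    then show False using pardep v w by (metis Diff_iff insertCI lessI less_SucI not_less_iff_gr_or_eq)
  qed
  have "card (f ` (V - {r})) = card E"
    using card_image[OF finj] cE rV fin by simp
  then have fE: "f ` (V - {r}) = E" using fsub finE by (intro card_subset_eq) auto
  have adjpar: "(u \<noteq> r \<and> par u = v) \<or> (v \<noteq> r \<and> par v = u)" if "u \<in> V" "v \<in> V" "adj E u v" for u v
  proof -
    have "{u, v} \<in> E" using that by (simp add: adj_def)
    then obtain w where w: "w \<in> V - {r}" "{u, v} = {w, par w}" using fE unfolding f_def by auto
    then show ?thesis by (auto simp: doubleton_eq_iff)
  qed
  have "rtree V E r par dep"
    by (unfold_locales) (use fin rV parV paradj pardep dep0 irr adjpar in auto)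
  then show ?thesis by blast
qed

theorem mainTheorem13:
  fixes V :: "'a set" and E :: "'a set set"
  assumes "is_tree V E"
  shows "gamma_DLD V E = independence_number V E"
proof -
  obtain r par dep where rt: "rtree V E r par dep" using tree_rooted[OF assms] by blast
  interpret rtree V E r par dep by (rule rt)
  have cl: "\<forall>v\<in>V. v \<noteq> r \<longrightarrow> par v \<in> V" using parV by auto
  obtain U S m where B: "U \<subseteq> V" "S \<subseteq> V" "\<forall>a\<in>S. \<forall>b\<in>S. \<not> adj E a b" "card S + card U = card V"
      "\<forall>u\<in>U. m u \<in> V \<and> m u \<notin> U \<and> adj E u (m u) \<and> (\<forall>u'\<in>U. u' \<noteq> u \<longrightarrow> \<not> adj E (m u) u')"
    using build[OF subset_refl cl] by blast
  define C where "C = V - U"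
  have mI: "m u \<in> I_code V E C u" if "u \<in> U" for u
    using B(5) that unfolding I_code_def closed_nbhd_def open_nbhd_def C_def by auto
  have mnI: "m u \<notin> I_code V E C v" if "u \<in> U" "v \<in> U" "u \<noteq> v" for u v
  proof
    assume "m u \<in> I_code V E C v"
    then have "m u = v \<or> adj E v (m u)" unfolding I_code_def closed_nbhd_def open_nbhd_def by auto
    then show False using B(5) that adj_sym by metis
  qed
  have CV: "C \<subseteq> V" unfolding C_def by auto
  have Cne: "C \<noteq> {}"
  proof (cases "U = {}")
    case True then show ?thesis using rV unfolding C_def by auto
  next
    case False
    then obtain u where "u \<in> U" by auto
    then show ?thesis using B(5) unfolding C_def by auto
  qed
  have VC: "V - C = U" using B(1) unfolding C_def by auto
  have sld: "solid_locating_dominating V E C"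
    unfolding solid_locating_dominating_def
  proof (intro conjI Cne CV ballI impI)
    fix u assume "u \<in> V - C" then show "I_code V E C u \<noteq> {}" using mI VC by blast
  next
    fix u v assume "u \<in> V - C" "v \<in> V - C" "u \<noteq> v"
    then show "\<not> I_code V E C u \<subseteq> I_code V E C v" using mI mnI VC by blast
  qed
  have cardC: "card C = card S"
    using B(1,4) fin unfolding C_def by (simp add: card_Diff_subset finite_subset)
  have indS: "independent_set V E S" using B(2,3) unfolding independent_set_def by auto
  define K where "K = {card S | S. independent_set V E S}"
  have finK: "finite K"
  proof -
    have "K \<subseteq> card ` Pow V" unfolding K_def independent_set_def by auto
    then show ?thesis using fin finite_subset by blast
  qed
  have SK: "card S \<in> K" using indS unfolding K_def by auto
  have beta: "independence_number V E = Max K" unfolding K_def independence_number_def by simp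
  have g1: "gamma_DLD V E \<le> card C"
    unfolding gamma_DLD_def using sld by (intro Least_le) blast
  have "\<exists>C0. solid_locating_dominating V E C0 \<and> card C0 = gamma_DLD V E"
  proof -
    let ?Q = "\<lambda>k. \<exists>C. solid_locating_dominating V E C \<and> card C = k"
    have "?Q (Least ?Q)" by (rule LeastI_ex) (use sld in blast)
    then show ?thesis unfolding gamma_DLD_def by simp
  qed
  then obtain C0 where C0: "solid_locating_dominating V E C0" "card C0 = gamma_DLD V E" by blast
  have "Max K \<in> K" using finK SK by (intro Max_in) auto
  then obtain S0 where S0: "independent_set V E S0" "card S0 = Max K" unfolding K_def by auto
  have "Max K \<le> gamma_DLD V E" using lower[OF C0(1) S0(1)] S0(2) C0(2) by simp
  moreover have "gamma_DLD V E \<le> Max K" using g1 cardC Max_ge[OF finK SK] by simp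
  ultimately show ?thesis using beta by simp
qed

end
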